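(* Let $A\in\mathbb{R}^{m\times n}$ with $m<n$, let $B$ be a matrix whose columns form a basis of the null space of $A$, let $p\in(0,1)$, let $T\subseteq\{1,\dots,n\}$ be a fixed support and let $\sigma\in\{-1,+1\}^T$ be a fixed sign pattern. Then every $\mathbf{x}\in\mathbb{R}^n$ with support exactly $T$ and $\operatorname{sgn}(x_i)=\sigma_i$ for all $i\in T$ is the unique solution of the $\ell_p$-minimization problem $\min\{\|\mathbf{v}\|_p^p : A\mathbf{v}=A\mathbf{x}\}$ if and only if the following holds for every nonzero vector $\mathbf{z}$ (of dimension equal to the number of columns of $B$): with $T^-=\{i\in T:(B\mathbf{z})_i\sigma_i<0\}$ and $T^+=\{i\in T:(B\mathbf{z})_i\sigma_i\ge 0\}$, $$\|B_{T^-}\mathbf{z}\|_p^p\le \|B_{T^c}\mathbf{z}\|_p^p,$$ and moreover, if $B_{T^+}\mathbf{z}=\mathbf{0}$, then $\|B_{T^-}\mathbf{z}\|_p^p< \|B_{T^c}\mathbf{z}\|_p^p$.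
   Context: For $p>0$, $\|\mathbf{v}\|_p^p=\sum_i|v_i|^p$. For an index set $S$, $B_S$ denotes the submatrix of $B$ consisting of the rows indexed by $S$; $T^c=\{1,\dots,n\}\setminus T$. The support of $\mathbf{x}$ is $\{i: x_i\neq 0\}$. *)

theory Defs
  imports "HOL-Analysis.Analysis"
begin

text \<open>The p-th power of the l_p quasi-norm of the restriction of a vector to an index set S:
  sum over i in S of |y_i|^p. For y = B z this is the quantity for the submatrix B_S applied to z.\<close>
definition lpp :: "real \<Rightarrow> 'n set \<Rightarrow> real^'n \<Rightarrow> real" where
  "lpp p S y = (\<Sum>i\<in>S. \<bar>y $ i\<bar> powr p)"

definition support_vec :: "real^'n \<Rightarrow> 'n set" where
  "support_vec x = {i. x $ i \<noteq> 0}"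

definition columns_basis_of_null_space :: "real^'k^'n \<Rightarrow> real^'n^'m \<Rightarrow> bool" where
  "columns_basis_of_null_space B A \<longleftrightarrow>
     inj (\<lambda>j. column j B) \<and> independent (columns B) \<and>
     span (columns B) = {v. A *v v = 0}"

definition unique_lp_solution :: "real^'n^'m \<Rightarrow> real \<Rightarrow> real^'n \<Rightarrow> bool" where
  "unique_lp_solution A p x \<longleftrightarrow>
     (\<forall>v. A *v v = A *v x \<and> v \<noteq> x \<longrightarrow> lpp p UNIV x < lpp p UNIV v)"

end

theory Submission
  imports Defs
begin
lemma Bv_sum: "(B::real^'k^'n) *v z = (\<Sum>j\<in>UNIV. (z$j) *\<^sub>R column j B)"
  by (simp add: matrix_mult_sum scalar_mult_eq_scaleR)

lemma cols_eq: "columns (B::real^'k^'n) = (\<lambda>j. column j B) ` UNIV"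
  by (auto simp: columns_def)

lemma ker_in:
  assumes "columns_basis_of_null_space B A"
  shows "A *v (B *v z) = 0"
  using matrix_vector_mult_in_columnspace[of B z] assms
  unfolding columns_basis_of_null_space_def by auto

lemma inj0:
  assumes "columns_basis_of_null_space B A" and "B *v z = 0"
  shows "z = 0"
proof -
  have inj: "inj (\<lambda>j. column j B)" and ind: "independent (columns B)"
    using assms(1) unfolding columns_basis_of_null_space_def by auto
  define c where "c v = z $ (inv (\<lambda>j. column j B) v)" for v
  have "(\<Sum>v\<in>columns B. c v *\<^sub>R v) = (\<Sum>j\<in>UNIV. c (column j B) *\<^sub>R column j B)"
    unfolding cols_eq by (rule sum.reindex[OF inj_on_subset[OF inj], simplified])
  also have "\<dots> = B *v z" proof -
    have iv: "\<And>j. inv (\<lambda>j. column j B) (column j B) = j" by (rule inv_f_f[OF inj])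
    show ?thesis unfolding Bv_sum c_def iv ..
  qed
  finally have s: "(\<Sum>v\<in>columns B. c v *\<^sub>R v) = 0" using assms(2) by simp
  have "\<forall>j. z $ j = 0"
  proof
    fix j
    have fin: "finite (columns B)" by (simp add: cols_eq)
    have mem: "column j B \<in> columns B" by (simp add: cols_eq)
    have "c (column j B) = 0"
      by (rule ind[unfolded real_vector.independent_explicit_module, rule_format, OF fin order_refl s mem])
    thus "z $ j = 0" by (simp only: c_def inv_f_f[OF inj])
  qed
  thus ?thesis by (simp add: vec_eq_iff)
qed

lemma ker_out:
  assumes "columns_basis_of_null_space B A" and "A *v w = 0"
  shows "\<exists>z. w = B *v z"
proof -
  have inj: "inj (\<lambda>j. column j B)" and sp: "span (columns B) = {v. A *v v = 0}"
    using assms(1) unfolding columns_basis_of_null_space_def by auto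
  have "w \<in> span (columns B)" using sp assms(2) by simp
  then obtain u where u: "w = (\<Sum>v\<in>columns B. u v *\<^sub>R v)"
    using real_vector.span_finite[of "columns B"] by (auto simp: cols_eq)
  also have "\<dots> = (\<Sum>j\<in>UNIV. u (column j B) *\<^sub>R column j B)"
    unfolding cols_eq by (rule sum.reindex[OF inj_on_subset[OF inj], simplified])
  also have "\<dots> = B *v (\<chi> j. u (column j B))" unfolding Bv_sum by simp
  finally show ?thesis by blast
qed

lemma subadd: 
  fixes s t p :: real assumes "0 \<le> s" "0 \<le> t" "0 < p" "p \<le> 1"
  shows "(s + t) powr p \<le> s powr p + t powr p"
proof (cases "s + t = 0")
  case True thus ?thesis using assms by simp
next
  case False
  hence pos: "s + t > 0" using assms by simp
  have le1: "x \<le> x powr p" if "0 \<le> x" "x \<le> 1" for x :: real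
    using that assms by (metis powr_mono' powr_one)
  have a: "s / (s+t) \<le> (s/(s+t)) powr p"
    using assms pos by (intro le1) (auto simp: divide_simps)
  have b: "t / (s+t) \<le> (t/(s+t)) powr p"
    using assms pos by (intro le1) (auto simp: divide_simps)
  have "1 = s/(s+t) + t/(s+t)" using pos by (simp add: add_divide_distrib[symmetric])
  also have "\<dots> \<le> (s powr p + t powr p) / (s+t) powr p"
    using a b assms pos by (simp add: powr_divide add_divide_distrib)
  finally show ?thesis using pos by (simp add: divide_simps)
qed

lemma bnd:
  fixes M a p :: real assumes "0 < M" "0 \<le> a" "0 < p" "p \<le> 1"
  shows "(M + a) powr p \<le> M powr p + M powr (p - 1) * a"
proof -
  have "(M + a) powr p = M powr p * (1 + a/M) powr p"
    using assms by (simp add: powr_mult[symmetric] distrib_left)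
  also have "(1 + a/M) powr p \<le> (1 + a/M) powr 1"
    using assms by (intro powr_mono) auto
  hence "M powr p * (1 + a/M) powr p \<le> M powr p * (1 + a/M)"
    using assms by (intro mult_left_mono) auto
  also have "M powr p * (1 + a/M) = M powr p + M powr (p - 1) * a"
    using assms by (simp add: powr_diff distrib_left)
  finally show ?thesis .
qed
lemma split3:
  fixes f :: "'n::finite \<Rightarrow> real"
  assumes "\<And>i. Q i \<longleftrightarrow> \<not> P i"
  shows "(\<Sum>i\<in>UNIV. f i) = (\<Sum>i\<in>{i\<in>T. P i}. f i) + (\<Sum>i\<in>{i\<in>T. Q i}. f i) + (\<Sum>i\<in>UNIV - T. f i)"
proof -
  have "(\<Sum>i\<in>UNIV. f i) = (\<Sum>i\<in>T. f i) + (\<Sum>i\<in>UNIV - T. f i)"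
    using sum.subset_diff[of T UNIV f] by simp
  moreover have "T = {i\<in>T. P i} \<union> {i\<in>T. Q i}" using assms by auto
  moreover have "(\<Sum>i\<in>{i\<in>T. P i} \<union> {i\<in>T. Q i}. f i) = (\<Sum>i\<in>{i\<in>T. P i}. f i) + (\<Sum>i\<in>{i\<in>T. Q i}. f i)"
    using assms by (intro sum.union_disjoint) auto
  ultimately show ?thesis by simp
qed

lemma dir1:
  fixes A :: "real^'n^'m" and B :: "real^'k^'n" and p :: real
    and T :: "'n set" and \<sigma> :: "'n \<Rightarrow> real"
  assumes cb: "columns_basis_of_null_space B A"
    and p: "0 < p" "p < 1"
    and sg: "\<forall>i\<in>T. \<sigma> i \<in> {-1, 1}"
    and L: "\<forall>x::real^'n. support_vec x = T \<and> (\<forall>i\<in>T. sgn (x $ i) = \<sigma> i)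
            \<longrightarrow> unique_lp_solution A p x"
    and z: "z \<noteq> 0"
  defines "w \<equiv> B *v z"
  defines "Tm \<equiv> {i\<in>T. w $ i * \<sigma> i < 0}" and "Tp \<equiv> {i\<in>T. w $ i * \<sigma> i \<ge> 0}"
  shows "lpp p Tm w \<le> lpp p (UNIV - T) w \<and>
          ((\<forall>i\<in>Tp. w $ i = 0) \<longrightarrow> lpp p Tm w < lpp p (UNIV - T) w)"
proof -
  have w0: "w \<noteq> 0" using inj0[OF cb] z unfolding w_def by blast
  have Aw: "A *v w = 0" using ker_in[OF cb] unfolding w_def by blast
  define C where "C = (\<Sum>i\<in>Tp. \<bar>w $ i\<bar>)"
  have C0: "C \<ge> 0" unfolding C_def by (simp add: sum_nonneg)
  have key: "lpp p Tm w < lpp p (UNIV - T) w + M powr (p - 1) * C" if M: "M > 0" for M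
  proof -
    define x :: "real^'n" where "x = (\<chi> i. if i \<in> Tm then - w $ i else if i \<in> Tp then \<sigma> i * M else 0)"
    define v where "v = x + w"
    have sgi: "\<sigma> i = 1 \<or> \<sigma> i = -1" if "i \<in> T" for i using sg that by auto
    have dj: "i \<in> Tp \<Longrightarrow> i \<notin> Tm" for i unfolding Tm_def Tp_def by auto
    have xm: "x $ i = - w $ i" if "i \<in> Tm" for i using that unfolding x_def by simp
    have xp: "x $ i = \<sigma> i * M" if "i \<in> Tp" for i using that dj[OF that] unfolding x_def by simp
    have xo: "x $ i = 0" if "i \<notin> T" for i using that unfolding x_def Tm_def Tp_def by simp
    have cov: "i \<in> T \<Longrightarrow> i \<in> Tm \<or> i \<in> Tp" for i unfolding Tm_def Tp_def by auto
    have sub: "i \<in> Tm \<Longrightarrow> i \<in> T" "i \<in> Tp \<Longrightarrow> i \<in> T" for i unfolding Tm_def Tp_def by auto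
    have tmw: "w $ i * \<sigma> i < 0" if "i \<in> Tm" for i using that unfolding Tm_def by simp
    have tpw: "w $ i * \<sigma> i \<ge> 0" if "i \<in> Tp" for i using that unfolding Tp_def by simp
    have each: "x $ i \<noteq> 0 \<and> sgn (x $ i) = \<sigma> i" if i: "i \<in> T" for i
    proof (cases "i \<in> Tm")
      case True
      then show ?thesis using sgi[OF i] tmw[OF True] xm[OF True]
        by (auto simp: sgn_if)
    next
      case False
      then have "i \<in> Tp" using cov[OF i] by simp
      then show ?thesis using sgi[OF i] M xp[OF \<open>i \<in> Tp\<close>] by (auto simp: sgn_if)
    qed
    have supp: "support_vec x = T"
      unfolding support_vec_def using each xo by blast
    have sgn: "\<forall>i\<in>T. sgn (x $ i) = \<sigma> i" using each by blast
    have u: "unique_lp_solution A p x" using L supp sgn by blast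
    have "A *v v = A *v x" unfolding v_def by (simp add: matrix_vector_right_distrib Aw)
    moreover have "v \<noteq> x" using w0 unfolding v_def by simp
    ultimately have lt: "lpp p UNIV x < lpp p UNIV v" using u unfolding unique_lp_solution_def by blast
    have sp: "(\<Sum>i\<in>UNIV. f i) = (\<Sum>i\<in>Tm. f i) + (\<Sum>i\<in>Tp. f i) + (\<Sum>i\<in>UNIV - T. f i)" for f :: "'n \<Rightarrow> real"
      unfolding Tm_def Tp_def by (rule split3) auto
    have lx: "lpp p UNIV x = lpp p Tm w + (\<Sum>i\<in>Tp. M powr p)"
    proof -
      have "(\<Sum>i\<in>Tm. \<bar>x $ i\<bar> powr p) = lpp p Tm w" unfolding lpp_def x_def by simp
      moreover have "(\<Sum>i\<in>Tp. \<bar>x $ i\<bar> powr p) = (\<Sum>i\<in>Tp. M powr p)"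
      proof (rule sum.cong)
        fix i assume i: "i \<in> Tp"
        show "\<bar>x $ i\<bar> powr p = M powr p" using xp[OF i] sgi[OF sub(2)[OF i]] M by auto
      qed simp
      moreover have "(\<Sum>i\<in>UNIV-T. \<bar>x $ i\<bar> powr p) = 0"
        apply (rule sum.neutral) using xo by simp
      ultimately show ?thesis unfolding lpp_def sp[of "\<lambda>i. \<bar>x $ i\<bar> powr p"] by simp
    qed
    have lv: "lpp p UNIV v = (\<Sum>i\<in>Tp. (M + \<bar>w $ i\<bar>) powr p) + lpp p (UNIV - T) w"
    proof -
      have "(\<Sum>i\<in>Tm. \<bar>v $ i\<bar> powr p) = 0"
        apply (rule sum.neutral) using xm unfolding v_def by simp
      moreover have "(\<Sum>i\<in>Tp. \<bar>v $ i\<bar> powr p) = (\<Sum>i\<in>Tp. (M + \<bar>w $ i\<bar>) powr p)"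
      proof (rule sum.cong)
        fix i assume i: "i \<in> Tp"
        have "\<bar>v $ i\<bar> = M + \<bar>w $ i\<bar>"
          using sgi[OF sub(2)[OF i]] M tpw[OF i] xp[OF i] unfolding v_def
          by (auto simp: abs_if zero_le_mult_iff)
        thus "\<bar>v $ i\<bar> powr p = (M + \<bar>w $ i\<bar>) powr p" by simp
      qed simp
      moreover have "(\<Sum>i\<in>UNIV-T. \<bar>v $ i\<bar> powr p) = lpp p (UNIV - T) w"
        unfolding lpp_def v_def using xo by (intro sum.cong) auto
      ultimately show ?thesis unfolding lpp_def sp[of "\<lambda>i. \<bar>v $ i\<bar> powr p"] by simp
    qed
    have "(\<Sum>i\<in>Tp. (M + \<bar>w $ i\<bar>) powr p) \<le> (\<Sum>i\<in>Tp. M powr p + M powr (p - 1) * \<bar>w $ i\<bar>)"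
      using bnd M p by (intro sum_mono) auto
    also have "\<dots> = (\<Sum>i\<in>Tp. M powr p) + M powr (p - 1) * C"
      unfolding C_def by (simp add: sum.distrib sum_distrib_left)
    finally show ?thesis using lt lx lv by linarith
  qed
  have part1: "lpp p Tm w \<le> lpp p (UNIV - T) w"
  proof (rule ccontr)
    assume nt: "\<not> ?thesis"
    define D where "D = lpp p Tm w - lpp p (UNIV - T) w"
    have D: "D > 0" using nt unfolding D_def by simp
    define M where "M = (D / (C + 1)) powr (1 / (p - 1))"
    have Mp: "M > 0" unfolding M_def using D C0 by simp
    have "M powr (p - 1) = D / (C + 1)"
      unfolding M_def using p D C0 by (simp add: powr_powr)
    moreover have "M powr (p - 1) * C \<le> M powr (p - 1) * (C + 1)"
      by (intro mult_left_mono) auto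
    moreover have "D / (C + 1) * (C + 1) = D" using C0 by simp
    ultimately have "M powr (p - 1) * C \<le> D" by simp
    thus False using key[OF Mp] unfolding D_def by linarith
  qed
  have part2: "lpp p Tm w < lpp p (UNIV - T) w" if "\<forall>i\<in>Tp. w $ i = 0"
  proof -
    have "C = 0" unfolding C_def using that by simp
    thus ?thesis using key[of 1] by simp
  qed
  show ?thesis using part1 part2 by blast
qed
lemma dir2:
  fixes A :: "real^'n^'m" and B :: "real^'k^'n" and p :: real
    and T :: "'n set" and \<sigma> :: "'n \<Rightarrow> real"
  assumes cb: "columns_basis_of_null_space B A"
    and p: "0 < p" "p < 1"
    and sg: "\<forall>i\<in>T. \<sigma> i \<in> {-1, 1}"
    and R: "\<forall>z::real^'k. z \<noteq> 0 \<longrightarrow>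
      (let Tm = {i\<in>T. (B *v z) $ i * \<sigma> i < 0};
           Tp = {i\<in>T. (B *v z) $ i * \<sigma> i \<ge> 0}
       in lpp p Tm (B *v z) \<le> lpp p (UNIV - T) (B *v z) \<and>
          ((\<forall>i\<in>Tp. (B *v z) $ i = 0) \<longrightarrow> lpp p Tm (B *v z) < lpp p (UNIV - T) (B *v z)))"
    and xs: "support_vec x = T" and xsg: "\<forall>i\<in>T. sgn (x $ i) = \<sigma> i"
  shows "unique_lp_solution A p x"
  unfolding unique_lp_solution_def
proof (intro allI impI, elim conjE)
  fix v assume Av: "A *v v = A *v x" and vx: "v \<noteq> x"
  define w where "w = v - x"
  have "A *v w = 0" unfolding w_def using Av by (simp add: matrix_vector_mult_diff_distrib)
  then obtain z where wz: "w = B *v z" using ker_out[OF cb] by blast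
  have z0: "z \<noteq> 0" using vx wz unfolding w_def by auto
  define Tm where "Tm = {i\<in>T. w $ i * \<sigma> i < 0}"
  define Tp where "Tp = {i\<in>T. w $ i * \<sigma> i \<ge> 0}"
  have RR: "lpp p Tm w \<le> lpp p (UNIV - T) w \<and>
          ((\<forall>i\<in>Tp. w $ i = 0) \<longrightarrow> lpp p Tm w < lpp p (UNIV - T) w)"
    using R z0 unfolding Tm_def Tp_def wz Let_def by blast
  have vv: "v $ i = x $ i + w $ i" for i unfolding w_def by simp
  have sgi: "\<sigma> i = 1 \<or> \<sigma> i = -1" if "i \<in> T" for i using sg that by auto
  have xo: "x $ i = 0" if "i \<notin> T" for i using that xs unfolding support_vec_def by auto
  have xT: "x $ i \<noteq> 0" if "i \<in> T" for i using that xs unfolding support_vec_def by auto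
  have sp: "(\<Sum>i\<in>UNIV. f i) = (\<Sum>i\<in>Tm. f i) + (\<Sum>i\<in>Tp. f i) + (\<Sum>i\<in>UNIV - T. f i)" for f :: "'n \<Rightarrow> real"
    unfolding Tm_def Tp_def by (rule split3) auto
  have subT: "i \<in> Tm \<Longrightarrow> i \<in> T" "i \<in> Tp \<Longrightarrow> i \<in> T" for i unfolding Tm_def Tp_def by auto
  have lx: "lpp p UNIV x = (\<Sum>i\<in>Tm. \<bar>x $ i\<bar> powr p) + (\<Sum>i\<in>Tp. \<bar>x $ i\<bar> powr p)"
    unfolding lpp_def sp[of "\<lambda>i. \<bar>x $ i\<bar> powr p"] using xo by simp
  have lv: "lpp p UNIV v = (\<Sum>i\<in>Tm. \<bar>v $ i\<bar> powr p) + (\<Sum>i\<in>Tp. \<bar>v $ i\<bar> powr p) + lpp p (UNIV - T) w"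
    unfolding lpp_def sp[of "\<lambda>i. \<bar>v $ i\<bar> powr p"] using xo vv by simp
  have m: "(\<Sum>i\<in>Tm. \<bar>x $ i\<bar> powr p) \<le> (\<Sum>i\<in>Tm. \<bar>v $ i\<bar> powr p) + lpp p Tm w"
    unfolding lpp_def sum.distrib[symmetric]
  proof (rule sum_mono)
    fix i
    have "\<bar>x $ i\<bar> \<le> \<bar>v $ i\<bar> + \<bar>w $ i\<bar>" using vv[of i] by linarith
    hence "\<bar>x $ i\<bar> powr p \<le> (\<bar>v $ i\<bar> + \<bar>w $ i\<bar>) powr p" using p by (intro powr_mono2) auto
    also have "\<dots> \<le> \<bar>v $ i\<bar> powr p + \<bar>w $ i\<bar> powr p" using p by (intro subadd) auto
    finally show "\<bar>x $ i\<bar> powr p \<le> \<bar>v $ i\<bar> powr p + \<bar>w $ i\<bar> powr p" .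
  qed
  have pabs: "\<bar>v $ i\<bar> = \<bar>x $ i\<bar> + \<bar>w $ i\<bar>" if i: "i \<in> Tp" for i
  proof -
    have iT: "i \<in> T" using subT(2)[OF i] .
    have ws: "w $ i * \<sigma> i \<ge> 0" using i unfolding Tp_def by simp
    have sx: "sgn (x $ i) = \<sigma> i" using xsg iT by blast
    from sgi[OF iT] show ?thesis
    proof
      assume s1: "\<sigma> i = 1"
      have "x $ i > 0" using sx s1 by (simp add: sgn_1_pos)
      moreover have "w $ i \<ge> 0" using ws s1 by simp
      ultimately show ?thesis using vv[of i] by simp
    next
      assume s1: "\<sigma> i = -1"
      have "x $ i < 0" using sx s1 by (simp add: sgn_1_neg)
      moreover have "w $ i \<le> 0" using ws s1 by simp
      ultimately show ?thesis using vv[of i] by simp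
    qed
  qed
  have pmono: "\<bar>x $ i\<bar> powr p \<le> \<bar>v $ i\<bar> powr p" if i: "i \<in> Tp" for i
    using pabs[OF i] p by (intro powr_mono2) auto
  show "lpp p UNIV x < lpp p UNIV v"
  proof (cases "\<forall>i\<in>Tp. w $ i = 0")
    case True
    have "(\<Sum>i\<in>Tp. \<bar>x $ i\<bar> powr p) \<le> (\<Sum>i\<in>Tp. \<bar>v $ i\<bar> powr p)"
      using pmono by (intro sum_mono) auto
    thus ?thesis using RR True lx lv m by linarith
  next
    case False
    then obtain j where j: "j \<in> Tp" "w $ j \<noteq> 0" by blast
    have "(\<Sum>i\<in>Tp. \<bar>x $ i\<bar> powr p) < (\<Sum>i\<in>Tp. \<bar>v $ i\<bar> powr p)"
    proof (rule sum_strict_mono_ex1)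
      show "finite Tp" by simp
      show "\<forall>i\<in>Tp. \<bar>x $ i\<bar> powr p \<le> \<bar>v $ i\<bar> powr p" using pmono by blast
      show "\<exists>i\<in>Tp. \<bar>x $ i\<bar> powr p < \<bar>v $ i\<bar> powr p"
        using j pabs[OF j(1)] p by (intro bexI[of _ j] powr_less_mono2) auto
    qed
    thus ?thesis using RR lx lv m by linarith
  qed
qed

theorem theorem3:
  fixes A :: "real^'n^'m" and B :: "real^'k^'n" and p :: real
    and T :: "'n set" and \<sigma> :: "'n \<Rightarrow> real"
  assumes "CARD('m) < CARD('n)"
    and "columns_basis_of_null_space B A"
    and "0 < p" and "p < 1"
    and "\<forall>i\<in>T. \<sigma> i \<in> {-1, 1}"
  shows "(\<forall>x::real^'n. support_vec x = T \<and> (\<forall>i\<in>T. sgn (x $ i) = \<sigma> i)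
            \<longrightarrow> unique_lp_solution A p x)
    \<longleftrightarrow>
    (\<forall>z::real^'k. z \<noteq> 0 \<longrightarrow>
      (let Tm = {i\<in>T. (B *v z) $ i * \<sigma> i < 0};
           Tp = {i\<in>T. (B *v z) $ i * \<sigma> i \<ge> 0}
       in lpp p Tm (B *v z) \<le> lpp p (UNIV - T) (B *v z) \<and>
          ((\<forall>i\<in>Tp. (B *v z) $ i = 0) \<longrightarrow> lpp p Tm (B *v z) < lpp p (UNIV - T) (B *v z))))"
  apply (rule iffI)
  subgoal premises L
    unfolding Let_def using dir1[OF assms(2,3,4,5) L] by blast
  subgoal premises R
    using dir2[OF assms(2,3,4,5) R] by blast
  done

end
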